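(* Let $N\ge1$ and $L=\sum_{i=0}^N a_i(x)\partial_x^i$ with $a_i(x)=\sum_{j=0}^i a_{i,j}x^j$ complex polynomials, $a_0\equiv0$, $a_i\equiv0$ for $i>N$, and let $\delta_n^{(k)}=\sum_{i=k}^n\binom ni i!\,a_{i,i-k}$ ($0\le k\le n$). Suppose there are $\lambda_n\in\mathbb{C}$ ($n\ge0$, $\lambda_0=0$, $\lambda_n\notin\{0,\lambda_1,\ldots,\lambda_{n-1}\}$ for $n\ge1$) and monic polynomials $P_n(x)=\sum_{i=0}^nb_{n,i}x^i$ of degree $n$ with $\sum_{i=1}^Na_i\partial_x^iP_n=\lambda_nP_n$ for all $n\ge0$. Then for every $n\ge1$ and $k=1,\ldots,n$, $$(-1)^{k+1}\delta_n^{(k)}=\sum_{s=1}^n\Delta_{k,n,s}\,s!\,a_{s,s},$$ where $\Delta_{k,n,s}$ is the determinant of the $k\times k$ matrix $D$ with first row $D_{1,c}=\left[\binom{n-k}{s-1}+\binom{n-k+1}{s-1}+\cdots+\binom{n-k+c-1}{s-1}\right]b_{n-k+c,\,n-k}$ ($1\le c\le k$) and, for $2\le\rho\le k$, $D_{\rho,c}=b_{n-k+c,\;n-k+\rho-1}$.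
   Context: Conventions: $b_{m,m}=1$, $b_{m,l}=0$ for $l>m$; $\binom{m}{s-1}=0$ for $m<s-1$; $a_{s,s}=0$ for $s>N$. $\partial_x^i$ is the $i$-th derivative in $x$. *)

theory Defs
  imports "HOL-Computational_Algebra.Polynomial" "Jordan_Normal_Form.Determinant"
begin

definition coef_poly :: "(nat \<Rightarrow> nat \<Rightarrow> complex) \<Rightarrow> nat \<Rightarrow> complex poly" where
  "coef_poly a i = (\<Sum>j\<le>i. monom (a i j) j)"

definition opL :: "nat \<Rightarrow> (nat \<Rightarrow> nat \<Rightarrow> complex) \<Rightarrow> complex poly \<Rightarrow> complex poly" where
  "opL N a p = (\<Sum>i=1..N. coef_poly a i * (pderiv ^^ i) p)"

definition delta :: "(nat \<Rightarrow> nat \<Rightarrow> complex) \<Rightarrow> nat \<Rightarrow> nat \<Rightarrow> complex" where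
  "delta a n k = (\<Sum>i=k..n. of_nat (n choose i) * fact i * a i (i - k))"

(* the k x k matrix D (0-indexed rows/columns), with b m l = coeff (P m) l *)
definition Dmat :: "(nat \<Rightarrow> complex poly) \<Rightarrow> nat \<Rightarrow> nat \<Rightarrow> nat \<Rightarrow> complex mat" where
  "Dmat P k n s = mat k k (\<lambda>(r, c).
     if r = 0 then
       (\<Sum>t=0..c. of_nat ((n - k + t) choose (s - 1))) * coeff (P (n - k + c + 1)) (n - k)
     else coeff (P (n - k + c + 1)) (n - k + r))"

definition Delta :: "(nat \<Rightarrow> complex poly) \<Rightarrow> nat \<Rightarrow> nat \<Rightarrow> nat \<Rightarrow> complex" where
  "Delta P k n s = det (Dmat P k n s)"

end

theory Submission
  imports Defs
begin

lemma higher_pderiv_add: "(pderiv ^^ i) (p + q) = (pderiv ^^ i) p + (pderiv ^^ i) (q :: complex poly)"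
  by (induct i) (auto simp: pderiv_add)

lemma higher_pderiv_smult: "(pderiv ^^ i) (smult c p) = smult c ((pderiv ^^ i) (p :: complex poly))"
  by (induct i) (auto simp: pderiv_smult)

lemma higher_pderiv_sum: "(pderiv ^^ i) (sum f A) = (\<Sum>x\<in>A. (pderiv ^^ i) (f x :: complex poly))"
  by (induct A rule: infinite_finite_induct) (auto simp: higher_pderiv_add)

lemma smult_sum_right: "smult c (sum f A) = (\<Sum>x\<in>A. smult c (f x :: complex poly))"
  by (induct A rule: infinite_finite_induct) (auto simp: smult_add_right)

lemma opL_sum_smult:
  "opL N a (\<Sum>x\<in>A. smult (c x) (q x)) = (\<Sum>x\<in>A. smult (c x) (opL N a (q x)))"
  unfolding opL_def higher_pderiv_sum higher_pderiv_smult
  by (simp add: sum_distrib_left smult_sum_right sum.swap[of _ A] flip: smult_sum)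

lemma coeff_opL_lin:
  "coeff (opL N a p) m = (\<Sum>l\<le>degree p. coeff p l * coeff (opL N a (monom 1 l)) m)"
proof -
  have "p = (\<Sum>l\<le>degree p. smult (coeff p l) (monom 1 l))"
    by (simp add: smult_monom poly_as_sum_of_monoms)
  then have "opL N a p = (\<Sum>l\<le>degree p. smult (coeff p l) (opL N a (monom 1 l)))"
    by (metis opL_sum_smult)
  then show ?thesis by (simp add: coeff_sum)
qed

lemma higher_pderiv_monom:
  "(pderiv ^^ i) (monom (1::complex) l) = monom (if i \<le> l then pochhammer (of_nat (l - i + 1)) i else 0) (l - i)"
  by (rule poly_eqI) (auto simp: coeff_higher_pderiv coeff_monom)

lemma poch_choose:
  assumes "i \<le> l"
  shows "pochhammer (of_nat (l - i + 1)) i = (of_nat (l choose i) * fact i :: complex)"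
proof -
  have "(fact l :: complex) = pochhammer 1 ((l - i) + i)" using assms by (simp add: pochhammer_fact)
  also have "\<dots> = pochhammer 1 (l - i) * pochhammer (1 + of_nat (l - i)) i"
    by (rule pochhammer_product')
  also have "\<dots> = fact (l - i) * pochhammer (of_nat (l - i + 1)) i"
    by (simp add: pochhammer_fact add.commute)
  finally have 1: "(fact l :: complex) = fact (l - i) * pochhammer (of_nat (l - i + 1)) i" .
  have "(fact l :: complex) = of_nat (fact i * fact (l - i) * (l choose i))"
    using binomial_fact_lemma[OF assms] by (metis of_nat_fact)
  then have "(fact l :: complex) = fact (l - i) * (of_nat (l choose i) * fact i)"
    by (simp add: of_nat_mult)
  with 1 show ?thesis by simp
qed

lemma coeff_coef_poly:
  assumes "\<And>i j. j > i \<Longrightarrow> a i j = 0"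
  shows "coeff (coef_poly a i) j = a i j"
  using assms by (auto simp: coef_poly_def coeff_sum coeff_monom)

lemma coeff_opL_monom:
  assumes a_deg: "\<And>i j. j > i \<Longrightarrow> a i j = 0"
    and a0: "\<And>j. a 0 j = 0"
    and aN: "\<And>i j. i > N \<Longrightarrow> a i j = 0"
  shows "coeff (opL N a (monom 1 l)) m = (if m \<le> l then delta a l (l - m) else 0)"
proof -
  define c where "c i = (if i \<le> l then pochhammer (of_nat (l - i + 1)) i else (0::complex))" for i
  have cc: "coeff (coef_poly a i) j = a i j" for i j using coeff_coef_poly[of a] a_deg by blast
  have 1: "coeff (opL N a (monom 1 l)) m = (\<Sum>i=1..N. if m < l - i then 0 else c i * a i (m - (l - i)))"
    unfolding opL_def higher_pderiv_monom coeff_sum c_def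
  proof (rule sum.cong[OF refl])
    fix i
    show "coeff (coef_poly a i * monom (if i \<le> l then pochhammer (of_nat (l - i + 1)) i else 0) (l - i)) m =
      (if m < l - i then 0 else (if i \<le> l then pochhammer (of_nat (l - i + 1)) i else 0) * a i (m - (l - i)))"
      unfolding mult.commute[of "coef_poly a i"] coeff_monom_mult cc by simp
  qed
  show ?thesis
  proof (cases "m \<le> l")
    case False
    have "(if m < l - i then 0 else c i * a i (m - (l - i))) = 0" for i
    proof (cases "i \<le> l")
      case True
      then have "i < m - (l - i)" using False by arith
      then show ?thesis using a_deg[of i "m - (l - i)"] by simp
    next
      case F: False
      then show ?thesis by (simp add: c_def)
    qed
    then show ?thesis using 1 False by simp
  next
    case True
    define h where "h i = (if l - m \<le> i \<and> i \<le> l then of_nat (l choose i) * fact i * a i (i - (l - m)) else (0::complex))" for i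
    have t: "(if m < l - i then 0 else c i * a i (m - (l - i))) = h i" for i
    proof (cases "l - m \<le> i \<and> i \<le> l")
      case T: True
      then have e: "m - (l - i) = i - (l - m)" "\<not> m < l - i" using True by arith+
      show ?thesis unfolding e(1) h_def c_def using T e(2) poch_choose[of i l] by simp
    next
      case F: False
      then show ?thesis unfolding h_def c_def using True by auto
    qed
    have a0': "a i j = 0" if "\<not> Suc 0 \<le> i" for i j
    proof -
      from that have "i = 0" by simp
      then show ?thesis using a0 by simp
    qed
    have "(\<Sum>i=1..N. h i) = (\<Sum>i=0..N+l. h i)"
      by (rule sum.mono_neutral_left) (auto simp: h_def a0' aN)
    also have "\<dots> = (\<Sum>i=l-m..l. h i)"
      by (rule sum.mono_neutral_right) (auto simp: h_def)
    also have "\<dots> = delta a l (l - m)"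
      unfolding delta_def by (rule sum.cong) (auto simp: h_def)
    finally show ?thesis using 1 t True by simp
  qed
qed

lemma coeff_opL:
  assumes a_deg: "\<And>i j. j > i \<Longrightarrow> a i j = 0"
    and a0: "\<And>j. a 0 j = 0"
    and aN: "\<And>i j. i > N \<Longrightarrow> a i j = 0"
    and d: "degree p \<le> m + K"
  shows "coeff (opL N a p) m = (\<Sum>r\<le>K. coeff p (m + r) * delta a (m + r) r)"
proof -
  have "coeff (opL N a p) m = (\<Sum>l\<le>degree p. coeff p l * (if m \<le> l then delta a l (l - m) else 0))"
    by (subst coeff_opL_lin) (simp add: coeff_opL_monom[of a N, OF a_deg a0 aN])
  also have "\<dots> = (\<Sum>l\<le>m + K. coeff p l * (if m \<le> l then delta a l (l - m) else 0))"
    by (rule sum.mono_neutral_left) (use d in \<open>auto simp: coeff_eq_0\<close>)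
  also have "\<dots> = (\<Sum>l\<in>{m..m+K}. coeff p l * delta a l (l - m))"
    by (rule sum.mono_neutral_cong_right) auto
  also have "\<dots> = (\<Sum>l\<in>(\<lambda>r. m + r) ` {..K}. coeff p l * delta a l (l - m))"
  proof -
    have "(\<lambda>r. m + r) ` {..K} = {m..m+K}"
    proof (intro equalityI subsetI)
      fix x assume "x \<in> {m..m+K}"
      then have "x = m + (x - m)" "x - m \<in> {..K}" by auto
      then show "x \<in> (\<lambda>r. m + r) ` {..K}" by blast
    qed auto
    then show ?thesis by simp
  qed
  also have "\<dots> = (\<Sum>r\<le>K. coeff p (m + r) * delta a (m + r) r)"
    by (subst sum.reindex) (auto simp: inj_on_def)
  finally show ?thesis .
qed


lemma cofactor_row0_cong:
  assumes "A \<in> carrier_mat k k" "B \<in> carrier_mat k k"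
    and "\<And>i c. 0 < i \<Longrightarrow> i < k \<Longrightarrow> c < k \<Longrightarrow> A $$ (i, c) = B $$ (i, c)"
  shows "cofactor A 0 j = cofactor B 0 j"
proof -
  have "mat_delete A 0 j = mat_delete B 0 j"
    unfolding mat_delete_def using assms by (intro cong_mat) auto
  then show ?thesis unfolding cofactor_def by simp
qed

lemma Dmat_carrier: "Dmat P k n s \<in> carrier_mat k k"
  unfolding Dmat_def by simp

lemma Dmat_dims[simp]: "dim_row (Dmat P k n s) = k" "dim_col (Dmat P k n s) = k"
  unfolding Dmat_def by simp_all

lemma Dmat_index: "r < k \<Longrightarrow> c < k \<Longrightarrow> Dmat P k n s $$ (r, c) =
     (if r = 0 then
       (\<Sum>t=0..c. of_nat ((n - k + t) choose (s - 1))) * coeff (P (n - k + c + 1)) (n - k)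
     else coeff (P (n - k + c + 1)) (n - k + r))"
  unfolding Dmat_def by simp

lemma det_Dmat_row0:
  assumes "0 < k"
  shows "Delta P k n s = (\<Sum>j<k. ((\<Sum>t=0..j. of_nat ((n - k + t) choose (s - 1))) * coeff (P (n - k + j + 1)) (n - k))
     * cofactor (Dmat P k n 1) 0 j)"
proof -
  have "Delta P k n s = (\<Sum>j<k. Dmat P k n s $$ (0, j) * cofactor (Dmat P k n s) 0 j)"
    unfolding Delta_def by (rule laplace_expansion_row[OF Dmat_carrier assms])
  also have "\<dots> = (\<Sum>j<k. ((\<Sum>t=0..j. of_nat ((n - k + t) choose (s - 1))) * coeff (P (n - k + j + 1)) (n - k))
     * cofactor (Dmat P k n 1) 0 j)"
  proof (rule sum.cong[OF refl])
    fix j assume j: "j \<in> {..<k}"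
    have "cofactor (Dmat P k n s) 0 j = cofactor (Dmat P k n 1) 0 j"
      by (rule cofactor_row0_cong[OF Dmat_carrier Dmat_carrier]) (simp add: Dmat_index)
    then show "Dmat P k n s $$ (0, j) * cofactor (Dmat P k n s) 0 j = ((\<Sum>t=0..j. of_nat ((n - k + t) choose (s - 1))) * coeff (P (n - k + j + 1)) (n - k))
     * cofactor (Dmat P k n 1) 0 j" using j assms by (simp add: Dmat_index)
  qed
  finally show ?thesis .
qed

lemma S_zero:
  assumes r: "1 \<le> r" "r < k"
  shows "(\<Sum>j<k. coeff (P (n - k + j + 1)) (n - k + r) * cofactor (Dmat P k n 1) 0 j) = 0"
proof -
  define F where "F = mat k k (\<lambda>(i, c). if i = 0 then coeff (P (n - k + c + 1)) (n - k + r)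
      else coeff (P (n - k + c + 1)) (n - k + i))"
  have Fc: "F \<in> carrier_mat k k" unfolding F_def by simp
  have "det F = (\<Sum>j<k. F $$ (0, j) * cofactor F 0 j)"
    by (rule laplace_expansion_row[OF Fc]) (use r in simp)
  also have "\<dots> = (\<Sum>j<k. coeff (P (n - k + j + 1)) (n - k + r) * cofactor (Dmat P k n 1) 0 j)"
  proof (rule sum.cong[OF refl])
    fix j assume j: "j \<in> {..<k}"
    have "cofactor F 0 j = cofactor (Dmat P k n 1) 0 j"
      by (rule cofactor_row0_cong[OF Fc Dmat_carrier]) (simp add: Dmat_index F_def)
    then show "F $$ (0, j) * cofactor F 0 j = coeff (P (n - k + j + 1)) (n - k + r) * cofactor (Dmat P k n 1) 0 j"
      using j r by (simp add: F_def)
  qed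
  finally have e: "det F = (\<Sum>j<k. coeff (P (n - k + j + 1)) (n - k + r) * cofactor (Dmat P k n 1) 0 j)" .
  have "det F = 0"
    by (rule det_identical_rows[OF Fc, of 0 r]) (use r in \<open>auto simp: F_def\<close>)
  with e show ?thesis by simp
qed

lemma cofactor_last:
  assumes k1: "1 \<le> k"
    and P_deg: "\<And>n. degree (P n) = n"
    and P_monic: "\<And>n. lead_coeff (P n) = 1"
  shows "cofactor (Dmat P k n 1) 0 (k - 1) = (-1) ^ (k - 1)"
proof -
  define U where "U = mat_delete (Dmat P k n 1) 0 (k - 1)"
  have Uc: "U \<in> carrier_mat (k - 1) (k - 1)"
    unfolding U_def by (rule mat_delete_carrier[OF Dmat_carrier])
  have Ui: "U $$ (i, j) = coeff (P (n - k + j + 1)) (n - k + Suc i)" if "i < k - 1" "j < k - 1" for i j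
    using that unfolding U_def mat_delete_def by (simp add: Dmat_index)
  have ut: "upper_triangular U"
    unfolding upper_triangular_def
  proof (intro allI impI)
    fix i j assume i: "i < dim_row U" and ji: "j < i"
    then have "i < k - 1" "j < k - 1" using Uc by auto
    then show "U $$ (i, j) = 0" using ji by (simp add: Ui coeff_eq_0 P_deg)
  qed
  have "det U = prod_list (diag_mat U)" by (rule det_upper_triangular[OF ut Uc])
  also have "diag_mat U = map (\<lambda>i. 1) [0..<k - 1]"
    unfolding diag_mat_def using Uc
    by (auto simp: Ui intro!: map_cong) (metis P_deg P_monic add.commute add_Suc_right)
  finally have "det U = 1" by (simp add: map_replicate_const prod_list_replicate)
  then show ?thesis unfolding cofactor_def U_def by simp
qed


theorem lemma3:
  fixes N :: nat and a :: "nat \<Rightarrow> nat \<Rightarrow> complex"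
    and lam :: "nat \<Rightarrow> complex" and P :: "nat \<Rightarrow> complex poly"
  assumes N1: "N \<ge> 1"
    and a_deg: "\<And>i j. j > i \<Longrightarrow> a i j = 0"
    and a0: "\<And>j. a 0 j = 0"
    and aN: "\<And>i j. i > N \<Longrightarrow> a i j = 0"
    and lam0: "lam 0 = 0"
    and lam_dist: "\<And>n m. 1 \<le> n \<Longrightarrow> m < n \<Longrightarrow> lam n \<noteq> lam m"
    and P_deg: "\<And>n. degree (P n) = n"
    and P_monic: "\<And>n. lead_coeff (P n) = 1"
    and P_eig: "\<And>n. opL N a (P n) = smult (lam n) (P n)"
    and n1: "1 \<le> n" and k1: "1 \<le> k" and kn: "k \<le> n"
  shows "(-1) ^ (k + 1) * delta a n k = (\<Sum>s=1..n. Delta P k n s * fact s * a s s)"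
proof -
  define M where "M = n - k"
  have a0': "a i j = 0" if "\<not> Suc 0 \<le> i" for i j
  proof -
    from that have "i = 0" by simp
    then show ?thesis using a0 by simp
  qed
  have nM: "n = M + k" using kn by (simp add: M_def)
  have bmon: "coeff (P m) m = 1" for m using P_monic[of m] by (simp add: P_deg)
  have lam_eq: "lam m = delta a m 0" for m
  proof -
    have "coeff (opL N a (P m)) m = lam m" using P_eig[of m] by (simp add: bmon)
    moreover have "coeff (opL N a (P m)) m = (\<Sum>r\<le>0. coeff (P m) (m + r) * delta a (m + r) r)"
    proof -
      have dP: "degree (P m) \<le> m + 0" by (simp add: P_deg)
      show ?thesis by (rule coeff_opL[of a N, OF a_deg a0 aN dP])
    qed
    ultimately show ?thesis by (simp add: bmon)
  qed
  have eig: "coeff (P q) M * (delta a q 0 - delta a M 0) = (\<Sum>r=1..k. coeff (P q) (M + r) * delta a (M + r) r)"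
    if "q \<le> M + k" for q
  proof -
    have "lam q * coeff (P q) M = coeff (opL N a (P q)) M" using P_eig[of q] by simp
    also have "\<dots> = (\<Sum>r\<le>k. coeff (P q) (M + r) * delta a (M + r) r)"
    proof -
      have dP: "degree (P q) \<le> M + k" using P_deg[of q] that by linarith
      show ?thesis by (rule coeff_opL[of a N, OF a_deg a0 aN dP])
    qed
    also have "{..k} = insert 0 {1..k}" by auto
    finally have "lam q * coeff (P q) M = coeff (P q) M * delta a M 0 + (\<Sum>r=1..k. coeff (P q) (M + r) * delta a (M + r) r)"
      by simp
    then show ?thesis using lam_eq[of q] by (simp add: algebra_simps)
  qed
  define g where "g m = (\<Sum>s=1..n. of_nat (m choose s) * fact s * a s s)" for m
  have gd: "g m = delta a m 0" if "m \<le> n" for m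
  proof -
    have "delta a m 0 = (\<Sum>i=0..m. of_nat (m choose i) * fact i * a i i)"
      unfolding delta_def by simp
    also have "\<dots> = (\<Sum>i=0..n. of_nat (m choose i) * fact i * a i i)"
      by (rule sum.mono_neutral_left) (use that in auto)
    also have "\<dots> = g m"
      unfolding g_def by (rule sum.mono_neutral_right) (auto simp: a0')
    finally show ?thesis by simp
  qed
  have gdiff: "g (Suc m) - g m = (\<Sum>s=1..n. of_nat (m choose (s - 1)) * fact s * a s s)" for m
  proof -
    have "g (Suc m) - g m = (\<Sum>s=1..n. of_nat (Suc m choose s) * fact s * a s s - of_nat (m choose s) * fact s * a s s)"
      unfolding g_def by (simp add: sum_subtractf)
    also have "\<dots> = (\<Sum>s=1..n. of_nat (m choose (s - 1)) * fact s * a s s)"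
    proof (rule sum.cong[OF refl])
      fix s :: nat assume "s \<in> {1..n}"
      then obtain s' where s': "s = Suc s'" by (cases s) auto
      show "of_nat (Suc m choose s) * fact s * a s s - of_nat (m choose s) * fact s * a s s =
          of_nat (m choose (s - 1)) * fact s * a s s"
        unfolding s' by (simp add: algebra_simps)
    qed
    finally show ?thesis .
  qed
  have tel: "(\<Sum>s=1..n. (\<Sum>t=0..c. of_nat ((M + t) choose (s - 1))) * fact s * a s s)
      = delta a (M + c + 1) 0 - delta a M 0" if "c < k" for c
  proof -
    have "(\<Sum>s=1..n. (\<Sum>t=0..c. of_nat ((M + t) choose (s - 1))) * fact s * a s s)
        = (\<Sum>t=0..c. \<Sum>s=1..n. of_nat ((M + t) choose (s - 1)) * fact s * a s s)"
      unfolding sum_distrib_right by (rule sum.swap)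
    also have "\<dots> = (\<Sum>t=0..c. g (Suc (M + t)) - g (M + t))"
      by (simp add: gdiff)
    also have "\<dots> = g (M + Suc c) - g (M + 0)"
      using sum_Suc_diff[of 0 c "\<lambda>t. g (M + t)"] by simp
    also have "\<dots> = delta a (M + c + 1) 0 - delta a M 0"
      using that nM by (simp add: gd)
    finally show ?thesis .
  qed
  define C where "C j = cofactor (Dmat P k n 1) 0 j" for j
  define S where "S r = (\<Sum>j<k. coeff (P (M + j + 1)) (M + r) * C j)" for r
  have k0: "0 < k" using k1 by simp
  have "(\<Sum>s=1..n. Delta P k n s * fact s * a s s)
      = (\<Sum>s=1..n. \<Sum>j<k. coeff (P (M + j + 1)) M * C j * ((\<Sum>t=0..j. of_nat ((M + t) choose (s - 1))) * fact s * a s s))"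
  proof (rule sum.cong[OF refl])
    fix s
    have "Delta P k n s = (\<Sum>j<k. coeff (P (M + j + 1)) M * C j * (\<Sum>t=0..j. of_nat ((M + t) choose (s - 1))))"
      unfolding det_Dmat_row0[OF k0] C_def M_def by (simp add: mult_ac)
    then show "Delta P k n s * fact s * a s s = (\<Sum>j<k. coeff (P (M + j + 1)) M * C j * ((\<Sum>t=0..j. of_nat ((M + t) choose (s - 1))) * fact s * a s s))"
      by (simp add: sum_distrib_right mult.assoc)
  qed
  also have "\<dots> = (\<Sum>j<k. coeff (P (M + j + 1)) M * C j * (\<Sum>s=1..n. (\<Sum>t=0..j. of_nat ((M + t) choose (s - 1))) * fact s * a s s))"
    unfolding sum_distrib_left by (rule sum.swap)
  also have "\<dots> = (\<Sum>j<k. C j * (coeff (P (M + j + 1)) M * (delta a (M + j + 1) 0 - delta a M 0)))"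
  proof (rule sum.cong[OF refl])
    fix j assume "j \<in> {..<k}"
    then have j: "j < k" by simp
    show "coeff (P (M + j + 1)) M * C j * (\<Sum>s=1..n. (\<Sum>t=0..j. of_nat ((M + t) choose (s - 1))) * fact s * a s s)
      = C j * (coeff (P (M + j + 1)) M * (delta a (M + j + 1) 0 - delta a M 0))"
      by (subst tel[OF j]) (simp add: mult_ac)
  qed
  also have "\<dots> = (\<Sum>j<k. C j * (\<Sum>r=1..k. coeff (P (M + j + 1)) (M + r) * delta a (M + r) r))"
    by (rule sum.cong[OF refl]) (subst eig, auto)
  also have "\<dots> = (\<Sum>r=1..k. delta a (M + r) r * S r)"
    unfolding S_def sum_distrib_left by (subst sum.swap) (simp add: mult_ac)
  also have "\<dots> = delta a (M + k) k * S k"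
  proof -
    have "{1..k} = insert k {1..<k}" using k1 by auto
    moreover have "(\<Sum>r\<in>{1..<k}. delta a (M + r) r * S r) = 0"
    proof (rule sum.neutral, intro ballI)
      fix r assume "r \<in> {1..<k}"
      then have "S r = 0" unfolding S_def C_def M_def using S_zero[of r k P n] by simp
      then show "delta a (M + r) r * S r = 0" by simp
    qed
    ultimately show ?thesis by simp
  qed
  also have "S k = C (k - 1)"
  proof -
    have "{..<k} = insert (k - 1) {..<k - 1}" using k1 by auto
    moreover have "(\<Sum>j\<in>{..<k - 1}. coeff (P (M + j + 1)) (M + k) * C j) = 0"
      by (rule sum.neutral) (auto simp: coeff_eq_0 P_deg)
    moreover have "coeff (P (M + (k - 1) + 1)) (M + k) = 1" using k1 bmon
      by (metis add.assoc le_add_diff_inverse2)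
    ultimately show ?thesis unfolding S_def by simp
  qed
  also have "C (k - 1) = (-1) ^ (k - 1)"
    unfolding C_def by (rule cofactor_last[OF k1 P_deg P_monic])
  finally have "(\<Sum>s=1..n. Delta P k n s * fact s * a s s) = delta a n k * (-1) ^ (k - 1)"
    using nM by simp
  moreover have "(-1::complex) ^ (k + 1) = (-1) ^ (k - 1)"
  proof -
    obtain k' where "k = Suc k'" using k1 by (cases k) auto
    then show ?thesis by simp
  qed
  ultimately show ?thesis by simp
qed

end
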